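(* In the I-phase model, for every formula $A$: (1) for every formula $D$, every $n\ge 0$ and $T_1,\dots,T_n$ each a closed term or an atom, if $c^D T_1\cdots T_n\in[\![A]\!]$ then $c^D T_1\cdots T_n\in A^\dagger$; and (2) $A^\dagger\subseteq[\![A]\!]$.
   Context: System $\mathbf{IL}_{\mathbf{at}}$: formulas $A ::= X\mid A\to B\mid\forall X.A$ ($X$ atoms); terms $t ::= x\mid c^A\mid\lambda x.t\mid ts\mid\Lambda X.t\mid tX$ (a term-constant $c^A$ for each formula; $tX$ only with $X$ an atom). $\Gamma\vdash t:A$ derivable by: $\Gamma,x:A\vdash x:A$; $\Gamma\vdash c^A:A$; $\to$-introduction/elimination (abstraction/application); $\forall$-introduction ($\Gamma\vdash\Lambda X.t:\forall X.A$ from $\Gamma\vdash t:A$, $X$ not free in formulas of $\Gamma$); $\forall$-elimination ($\Gamma\vdash tY:A[X:=Y]$ from $\Gamma\vdash t:\forall X.A$, $Y$ an atom). $\beta$-reduction $(\lambda x.t)s\to_\beta t[x:=s]$, $(\Lambda X.t)Y\to_\beta t[X:=Y]$ in any subterm position; normal = no redex; $\twoheadrightarrow$ reflexive-transitive closure of $\to_\beta$. $\eta$-expansion: $t\to_{\eta^{-1}}\lambda x.(tx)$ ($x\notin FV(t)$), $t\to_{\eta^{-1}}\Lambda X.(tX)$ ($X\notin FV(t)$). Closed term = no free term-variables. $[\![A]\!]$ = closed terms $t$ with $t\twoheadrightarrow s$ for some normal $s$ such that $\vdash s:A$ is derivable. I-phase model: interpretation of formulas as sets of closed terms: $X^\dagger=[\![X]\!]$;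 $(B\to C)^\dagger$ = closed $t$ such that $t\twoheadrightarrow u\to_{\eta^{-1}}\lambda x.(ux)$ for some $u$ with $x\notin FV(u)$ and $ux[x:=s]\in C^\dagger$ for all $s\in B^\dagger$; $(\forall X.A)^\dagger$ = closed $t$ such that $t\twoheadrightarrow u\to_{\eta^{-1}}\Lambda X.(uX)$ for some $u$ with $X\notin FV(u)$ and $uX[X:=Y]\in(A[X:=Y])^\dagger$ for all atoms $Y$. *)

theory Defs
  imports Main
begin

text \<open>Atoms are natural numbers used as de Bruijn indices: an atom index not bound
by an enclosing quantifier (in formulas) or type abstraction (in terms) denotes a
free atom. Term variables are de Bruijn indices as well.\<close>

datatype fm = Atom nat | Imp fm fm | All fm

fun fsize :: "fm \<Rightarrow> nat" where
  "fsize (Atom n) = 1"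
| "fsize (Imp A B) = Suc (fsize A + fsize B)"
| "fsize (All A) = Suc (fsize A)"

fun fshift :: "nat \<Rightarrow> fm \<Rightarrow> fm" where
  "fshift k (Atom n) = Atom (if n < k then n else Suc n)"
| "fshift k (Imp A B) = Imp (fshift k A) (fshift k B)"
| "fshift k (All A) = All (fshift (Suc k) A)"

text \<open>\<open>fsubst k Y A\<close>: replace atom index k by the (outer) atom Y; \<open>A[X:=Y]\<close> for
\<open>\<forall>X. A\<close> is \<open>fsubst 0 Y A\<close>.\<close>
fun fsubst :: "nat \<Rightarrow> nat \<Rightarrow> fm \<Rightarrow> fm" where
  "fsubst k Y (Atom n) = Atom (if n < k then n else if n = k then Y + k else n - 1)"
| "fsubst k Y (Imp A B) = Imp (fsubst k Y A) (fsubst k Y B)"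
| "fsubst k Y (All A) = All (fsubst (Suc k) Y A)"

lemma fsize_fsubst[simp]: "fsize (fsubst k Y A) = fsize A"
  by (induction A arbitrary: k) auto

datatype tm = Var nat | Con fm | Lam tm | App tm tm | TLam tm | TApp tm nat

fun lift :: "nat \<Rightarrow> tm \<Rightarrow> tm" where
  "lift k (Var i) = Var (if i < k then i else Suc i)"
| "lift k (Con A) = Con A"
| "lift k (Lam t) = Lam (lift (Suc k) t)"
| "lift k (App t s) = App (lift k t) (lift k s)"
| "lift k (TLam t) = TLam (lift k t)"
| "lift k (TApp t Y) = TApp (lift k t) Y"

fun ashift :: "nat \<Rightarrow> tm \<Rightarrow> tm" where
  "ashift k (Var i) = Var i"
| "ashift k (Con A) = Con (fshift k A)"
| "ashift k (Lam t) = Lam (ashift k t)"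
| "ashift k (App t s) = App (ashift k t) (ashift k s)"
| "ashift k (TLam t) = TLam (ashift (Suc k) t)"
| "ashift k (TApp t n) = TApp (ashift k t) (if n < k then n else Suc n)"

fun subst :: "nat \<Rightarrow> tm \<Rightarrow> tm \<Rightarrow> tm" where
  "subst k s (Var i) = (if i < k then Var i else if i = k then s else Var (i - 1))"
| "subst k s (Con A) = Con A"
| "subst k s (Lam t) = Lam (subst (Suc k) (lift 0 s) t)"
| "subst k s (App t r) = App (subst k s t) (subst k s r)"
| "subst k s (TLam t) = TLam (subst k (ashift 0 s) t)"
| "subst k s (TApp t Y) = TApp (subst k s t) Y"

fun asubst :: "nat \<Rightarrow> nat \<Rightarrow> tm \<Rightarrow> tm" where
  "asubst k Y (Var i) = Var i"
| "asubst k Y (Con A) = Con (fsubst k Y A)"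
| "asubst k Y (Lam t) = Lam (asubst k Y t)"
| "asubst k Y (App t s) = App (asubst k Y t) (asubst k Y s)"
| "asubst k Y (TLam t) = TLam (asubst (Suc k) Y t)"
| "asubst k Y (TApp t n) =
     TApp (asubst k Y t) (if n < k then n else if n = k then Y + k else n - 1)"

text \<open>In the \<forall>-introduction rule the context is shifted, so the bound atom
(index 0) does not occur free in it.\<close>
inductive typing :: "fm list \<Rightarrow> tm \<Rightarrow> fm \<Rightarrow> bool" where
  T_Var: "i < length \<Gamma> \<Longrightarrow> typing \<Gamma> (Var i) (\<Gamma> ! i)"
| T_Con: "typing \<Gamma> (Con A) A"
| T_Lam: "typing (B # \<Gamma>) t C \<Longrightarrow> typing \<Gamma> (Lam t) (Imp B C)"
| T_App: "typing \<Gamma> t (Imp B C) \<Longrightarrow> typing \<Gamma> s B \<Longrightarrow> typing \<Gamma> (App t s) C"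
| T_TLam: "typing (map (fshift 0) \<Gamma>) t A \<Longrightarrow> typing \<Gamma> (TLam t) (All A)"
| T_TApp: "typing \<Gamma> t (All A) \<Longrightarrow> typing \<Gamma> (TApp t Y) (fsubst 0 Y A)"

inductive beta :: "tm \<Rightarrow> tm \<Rightarrow> bool" where
  B_beta: "beta (App (Lam t) s) (subst 0 s t)"
| B_tbeta: "beta (TApp (TLam t) Y) (asubst 0 Y t)"
| B_Lam: "beta t t' \<Longrightarrow> beta (Lam t) (Lam t')"
| B_AppL: "beta t t' \<Longrightarrow> beta (App t s) (App t' s)"
| B_AppR: "beta s s' \<Longrightarrow> beta (App t s) (App t s')"
| B_TLam: "beta t t' \<Longrightarrow> beta (TLam t) (TLam t')"
| B_TApp: "beta t t' \<Longrightarrow> beta (TApp t Y) (TApp t' Y)"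

abbreviation beta_star :: "tm \<Rightarrow> tm \<Rightarrow> bool" where
  "beta_star \<equiv> beta\<^sup>*\<^sup>*"

fun is_lam :: "tm \<Rightarrow> bool" where
  "is_lam (Lam _) = True" | "is_lam _ = False"

fun is_tlam :: "tm \<Rightarrow> bool" where
  "is_tlam (TLam _) = True" | "is_tlam _ = False"

fun normal :: "tm \<Rightarrow> bool" where
  "normal (Var i) = True"
| "normal (Con A) = True"
| "normal (Lam t) = normal t"
| "normal (App t s) = (\<not> is_lam t \<and> normal t \<and> normal s)"
| "normal (TLam t) = normal t"
| "normal (TApp t Y) = (\<not> is_tlam t \<and> normal t)"

fun closed_at :: "nat \<Rightarrow> tm \<Rightarrow> bool" where
  "closed_at k (Var i) = (i < k)"
| "closed_at k (Con A) = True"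
| "closed_at k (Lam t) = closed_at (Suc k) t"
| "closed_at k (App t s) = (closed_at k t \<and> closed_at k s)"
| "closed_at k (TLam t) = closed_at k t"
| "closed_at k (TApp t Y) = closed_at k t"

definition closed :: "tm \<Rightarrow> bool" where
  "closed t \<longleftrightarrow> closed_at 0 t"

definition den :: "fm \<Rightarrow> tm set" where
  "den A = {t. closed t \<and> (\<exists>s. beta_star t s \<and> normal s \<and> typing [] s A)}"

text \<open>The eta-expansion step \<open>u \<rightarrow> \<lambda>x.(u x)\<close>
(resp. \<open>\<Lambda>X.(u X)\<close>) with x (X) fresh is always available; its body \<open>u x\<close> is
\<open>App (lift 0 u) (Var 0)\<close> (resp. \<open>TApp (ashift 0 u) 0\<close>) in de Bruijn form.\<close>
function dag :: "fm \<Rightarrow> tm set" where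
  "dag (Atom X) = den (Atom X)"
| "dag (Imp B C) = {t. closed t \<and> (\<exists>u. beta_star t u \<and>
      (\<forall>s \<in> dag B. subst 0 s (App (lift 0 u) (Var 0)) \<in> dag C))}"
| "dag (All A) = {t. closed t \<and> (\<exists>u. beta_star t u \<and>
      (\<forall>Y. asubst 0 Y (TApp (ashift 0 u) 0) \<in> dag (fsubst 0 Y A)))}"
  by pat_completeness auto
termination
  by (relation "measure fsize") auto

text \<open>Spines \<open>c^D T_1 \<dots> T_n\<close>: each argument is a term (Inl) or an atom (Inr).\<close>
fun apps :: "tm \<Rightarrow> (tm + nat) list \<Rightarrow> tm" where
  "apps t [] = t"
| "apps t (Inl s # Ts) = apps (App t s) Ts"
| "apps t (Inr Y # Ts) = apps (TApp t Y) Ts"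

fun arg_ok :: "tm + nat \<Rightarrow> bool" where
  "arg_ok (Inl s) = closed s"
| "arg_ok (Inr Y) = True"

end

theory Submission
  imports Defs
begin

definition ext :: "(nat \<Rightarrow> nat) \<Rightarrow> nat \<Rightarrow> nat" where
  "ext f n = (case n of 0 \<Rightarrow> 0 | Suc m \<Rightarrow> Suc (f m))"

fun frn :: "(nat \<Rightarrow> nat) \<Rightarrow> fm \<Rightarrow> fm" where
  "frn f (Atom n) = Atom (f n)"
| "frn f (Imp A B) = Imp (frn f A) (frn f B)"
| "frn f (All A) = All (frn (ext f) A)"

fun trn :: "(nat \<Rightarrow> nat) \<Rightarrow> tm \<Rightarrow> tm" where
  "trn f (Var i) = Var i"
| "trn f (Con A) = Con (frn f A)"
| "trn f (Lam t) = Lam (trn f t)"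
| "trn f (App t s) = App (trn f t) (trn f s)"
| "trn f (TLam t) = TLam (trn (ext f) t)"
| "trn f (TApp t n) = TApp (trn f t) (f n)"

definition sh :: "nat \<Rightarrow> nat \<Rightarrow> nat" where
  "sh k n = (if n < k then n else Suc n)"
definition sg :: "nat \<Rightarrow> nat \<Rightarrow> nat \<Rightarrow> nat" where
  "sg k Y n = (if n < k then n else if n = k then Y + k else n - 1)"

lemma ext_comp: "ext f (ext g n) = ext (f \<circ> g) n"
  by (simp add: ext_def split: nat.split)

lemma frn_comp: "frn f (frn g A) = frn (f \<circ> g) A"
proof (induction A arbitrary: f g)
  case (All A)
  have "(\<lambda>a. ext f (ext g a)) = ext (\<lambda>a. f (g a))" by (rule ext) (simp add: ext_comp comp_def)
  then show ?case using All by simp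
qed auto

lemma trn_comp: "trn f (trn g t) = trn (f \<circ> g) t"
proof (induction t arbitrary: f g)
  case (TLam t)
  have "(\<lambda>a. ext f (ext g a)) = ext (\<lambda>a. f (g a))" by (rule ext) (simp add: ext_comp comp_def)
  then show ?case using TLam by simp
qed (auto simp: frn_comp)

lemma ext_id: "ext (\<lambda>n. n) = (\<lambda>n. n)"
  by (rule ext) (simp add: ext_def split: nat.split)

lemma frn_id: "frn (\<lambda>n. n) A = A"
  by (induction A) (auto simp: ext_id)

lemma trn_id: "trn (\<lambda>n. n) t = t"
  by (induction t) (auto simp: ext_id frn_id)

lemma ext_sh: "ext (sh k) = sh (Suc k)"
  by (rule ext) (simp add: ext_def sh_def split: nat.split)

lemma ext_sg: "ext (sg k Y) = sg (Suc k) Y"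
  by (rule ext) (auto simp add: ext_def sg_def split: nat.split)

lemma fshift_frn: "fshift k A = frn (sh k) A"
  by (induction A arbitrary: k) (auto simp: sh_def ext_sh)

lemma fsubst_frn: "fsubst k Y A = frn (sg k Y) A"
  by (induction A arbitrary: k) (auto simp: sg_def ext_sg)

lemma ashift_trn: "ashift k t = trn (sh k) t"
  by (induction t arbitrary: k) (auto simp: sh_def ext_sh fshift_frn)

lemma asubst_trn: "asubst k Y t = trn (sg k Y) t"
  by (induction t arbitrary: k) (auto simp: sg_def ext_sg fsubst_frn)

lemma ext_agree: "(\<forall>n<N. f n = g n) \<Longrightarrow> n < Suc N \<Longrightarrow> ext f n = ext g n"
  by (auto simp: ext_def split: nat.split)

fun fba :: "nat \<Rightarrow> fm \<Rightarrow> bool" where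
  "fba N (Atom n) = (n < N)"
| "fba N (Imp A B) = (fba N A \<and> fba N B)"
| "fba N (All A) = fba (Suc N) A"

fun tba :: "nat \<Rightarrow> tm \<Rightarrow> bool" where
  "tba N (Var i) = True"
| "tba N (Con A) = fba N A"
| "tba N (Lam t) = tba N t"
| "tba N (App t s) = (tba N t \<and> tba N s)"
| "tba N (TLam t) = tba (Suc N) t"
| "tba N (TApp t n) = (tba N t \<and> n < N)"

lemma frn_agree: "fba N A \<Longrightarrow> (\<forall>n<N. f n = g n) \<Longrightarrow> frn f A = frn g A"
proof (induction A arbitrary: N f g)
  case (All A)
  have "\<forall>n<Suc N. ext f n = ext g n" using All.prems(2) by (auto intro: ext_agree)
  then show ?case using All by simp
qed auto

lemma trn_agree: "tba N t \<Longrightarrow> (\<forall>n<N. f n = g n) \<Longrightarrow> trn f t = trn g t"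
proof (induction t arbitrary: N f g)
  case (TLam t)
  have "\<forall>n<Suc N. ext f n = ext g n" using TLam.prems(2) by (auto intro: ext_agree)
  then show ?case using TLam by simp
qed (auto intro: frn_agree)

lemma ext_bound: "(\<forall>n<N. f n < M) \<Longrightarrow> n < Suc N \<Longrightarrow> ext f n < Suc M"
  by (auto simp: ext_def split: nat.split)

lemma fba_frn: "fba N A \<Longrightarrow> (\<forall>n<N. f n < M) \<Longrightarrow> fba M (frn f A)"
proof (induction A arbitrary: N M f)
  case (All A)
  have "\<forall>n<Suc N. ext f n < Suc M" using All.prems(2) by (auto intro: ext_bound)
  then show ?case using All by simp
qed auto

lemma tba_trn: "tba N t \<Longrightarrow> (\<forall>n<N. f n < M) \<Longrightarrow> tba M (trn f t)"
proof (induction t arbitrary: N M f)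
  case (TLam t)
  have "\<forall>n<Suc N. ext f n < Suc M" using TLam.prems(2) by (auto intro: ext_bound)
  then show ?case using TLam by simp
qed (auto intro: fba_frn)

lemma fba_mono: "fba N A \<Longrightarrow> N \<le> M \<Longrightarrow> fba M A"
  by (induction A arbitrary: N M) force+

lemma tba_mono: "tba N t \<Longrightarrow> N \<le> M \<Longrightarrow> tba M t"
  by (induction t arbitrary: N M) (force intro: fba_mono)+

lemma fba_ex: "\<exists>N. fba N A"
proof (induction A)
  case (Atom n) then show ?case by (intro exI[of _ "Suc n"]) simp
next
  case (Imp A B)
  then obtain N M where "fba N A" "fba M B" by blast
  then show ?case by (intro exI[of _ "max N M"]) (auto intro: fba_mono)
next
  case (All A)
  then obtain N where "fba N A" by blast
  then show ?case by (intro exI[of _ "N"]) (auto intro: fba_mono)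
qed

lemma tba_ex: "\<exists>N. tba N t"
proof (induction t)
  case (Con A) then show ?case using fba_ex by simp
next
  case (App t s)
  then obtain N M where "tba N t" "tba M s" by blast
  then show ?case by (intro exI[of _ "max N M"]) (auto intro: tba_mono)
next
  case (TLam t)
  then obtain N where "tba N t" by blast
  then show ?case by (intro exI[of _ "N"]) (auto intro: tba_mono)
next
  case (TApp t n)
  then obtain N where "tba N t" by blast
  then show ?case by (intro exI[of _ "max N (Suc n)"]) (auto intro: tba_mono)
qed auto


lemma ext_sh0: "(\<lambda>a. ext f (sh 0 a)) = (\<lambda>a. sh 0 (f a))"
  by (rule ext) (simp add: ext_def sh_def)

lemma sg0_sh0: "(\<lambda>a. sg 0 Y (sh 0 a)) = (\<lambda>a. a)"
  by (rule ext) (simp add: sg_def sh_def)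

lemma subst_lift: "subst k s (lift k u) = u"
  by (induction u arbitrary: k s) auto

lemma trn_lift: "trn f (lift k s) = lift k (trn f s)"
  by (induction s arbitrary: k f) auto

lemma trn_ashift0: "trn (ext f) (ashift 0 s) = ashift 0 (trn f s)"
  by (simp add: ashift_trn trn_comp comp_def ext_sh0)

lemma trn_subst: "trn f (subst k s t) = subst k (trn f s) (trn f t)"
  by (induction t arbitrary: k s f) (auto simp: trn_lift trn_ashift0)

lemma lift_subst_con: "j \<le> k \<Longrightarrow> lift j (subst k (Con E) u) = subst (Suc k) (Con E) (lift j u)"
  by (induction u arbitrary: j k E) auto

lemma ashift0_subst: "ashift 0 (subst k s t) = subst k (ashift 0 s) (ashift 0 t)"
  using trn_subst[of "sh 0" k s t] by (simp add: ashift_trn)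

lemma subst_subst_con:
  "j \<le> k \<Longrightarrow> subst k (Con E) (subst j u t) = subst j (subst k (Con E) u) (subst (Suc k) (Con E) t)"
proof (induction t arbitrary: j k u E)
  case (Var i)
  then show ?case by auto
next
  case (Lam t)
  then show ?case by (simp add: lift_subst_con)
next
  case (TLam t)
  then show ?case by (simp add: ashift0_subst)
qed auto

inductive_cases typ_VarE: "typing \<Gamma> (Var i) A"
inductive_cases typ_ConE: "typing \<Gamma> (Con B) A"
inductive_cases typ_LamE: "typing \<Gamma> (Lam t) A"
inductive_cases typ_AppE: "typing \<Gamma> (App t s) A"
inductive_cases typ_TLamE: "typing \<Gamma> (TLam t) A"
inductive_cases typ_TAppE: "typing \<Gamma> (TApp t Y) A"

lemma typ_TLam': "typing (map (frn (sh 0)) \<Gamma>) t A \<Longrightarrow> typing \<Gamma> (TLam t) (All A)"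
  using T_TLam[of \<Gamma> t A] by (simp add: fshift_frn[abs_def])

lemma typ_TApp': "typing \<Gamma> t (All A) \<Longrightarrow> typing \<Gamma> (TApp t Y) (frn (sg 0 Y) A)"
  using T_TApp[of \<Gamma> t A Y] by (simp add: fsubst_frn)

lemma typing_closed: "typing \<Gamma> t A \<Longrightarrow> closed_at (length \<Gamma>) t"
  by (induction rule: typing.induct) auto

lemma typ_trn: "typing \<Gamma> t A \<Longrightarrow> typing (map (frn f) \<Gamma>) (trn f t) (frn f A)"
proof (induction arbitrary: f rule: typing.induct)
  case (T_Var i \<Gamma>)
  then show ?case using typing.T_Var[of i "map (frn f) \<Gamma>"] by simp
next
  case (T_Con \<Gamma> A)
  then show ?case by (simp add: typing.T_Con)
next
  case (T_Lam B \<Gamma> t C)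
  then show ?case by (simp add: typing.T_Lam)
next
  case (T_App \<Gamma> t B C s)
  then show ?case by (auto intro: typing.T_App)
next
  case (T_TLam \<Gamma> t A)
  have "typing (map (frn (ext f)) (map (fshift 0) \<Gamma>)) (trn (ext f) t) (frn (ext f) A)"
    using T_TLam.IH by blast
  moreover have eq: "map (frn (ext f)) (map (fshift 0) \<Gamma>) = map (frn (sh 0)) (map (frn f) \<Gamma>)"
    by (simp add: fshift_frn frn_comp comp_def ext_sh0)
  ultimately have "typing (map (frn (sh 0)) (map (frn f) \<Gamma>)) (trn (ext f) t) (frn (ext f) A)"
    by metis
  then have "typing (map (frn f) \<Gamma>) (TLam (trn (ext f) t)) (All (frn (ext f) A))" by (rule typ_TLam')
  then show ?case by simp
next
  case (T_TApp \<Gamma> t A Y)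
  have "typing (map (frn f) \<Gamma>) (trn f t) (All (frn (ext f) A))" using T_TApp.IH by simp
  then have "typing (map (frn f) \<Gamma>) (TApp (trn f t) (f Y)) (frn (sg 0 (f Y)) (frn (ext f) A))"
    by (rule typ_TApp')
  moreover have "(\<lambda>a. sg 0 (f Y) (ext f a)) = (\<lambda>a. f (sg 0 Y a))"
    by (rule ext) (simp add: sg_def ext_def split: nat.split)
  ultimately show ?case by (simp add: fsubst_frn frn_comp comp_def)
qed

lemma typ_subst_con:
  "typing \<Gamma> (subst k (Con E) b) C \<Longrightarrow> k \<le> length \<Gamma> \<Longrightarrow> typing (take k \<Gamma> @ E # drop k \<Gamma>) b C"
proof (induction b arbitrary: \<Gamma> k E C)
  case (Var i)
  show ?case
  proof (cases "i < k")
    case True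
    then have "typing \<Gamma> (Var i) C" using Var by simp
    then have "i < length \<Gamma>" "C = \<Gamma> ! i" by (auto elim: typ_VarE)
    moreover have "(take k \<Gamma> @ E # drop k \<Gamma>) ! i = \<Gamma> ! i" using True Var.prems(2) by (simp add: nth_append)
    ultimately show ?thesis using True typing.T_Var[of i "take k \<Gamma> @ E # drop k \<Gamma>"] by simp
  next
    case False
    show ?thesis
    proof (cases "i = k")
      case True
      then have "C = E" using Var by (auto elim: typ_ConE)
      then show ?thesis using True Var.prems(2) typing.T_Var[of k "take k \<Gamma> @ E # drop k \<Gamma>"]
        by (simp add: nth_append)
    next
      case False2: False
      then have "typing \<Gamma> (Var (i - 1)) C" using Var False by simp
      then have "i - 1 < length \<Gamma>" "C = \<Gamma> ! (i - 1)" by (auto elim: typ_VarE)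
      moreover have "(take k \<Gamma> @ E # drop k \<Gamma>) ! i = \<Gamma> ! (i - 1)"
        using False False2 Var.prems(2) by (simp add: nth_append nth_Cons')
      ultimately show ?thesis using False False2 typing.T_Var[of i "take k \<Gamma> @ E # drop k \<Gamma>"] by simp
    qed
  qed
next
  case (Con A)
  then show ?case by (auto elim!: typ_ConE intro: typing.T_Con)
next
  case (Lam t)
  from Lam.prems(1) obtain B D where C: "C = Imp B D" and t: "typing (B # \<Gamma>) (subst (Suc k) (Con E) t) D"
    by (auto elim: typ_LamE)
  have "typing (take (Suc k) (B # \<Gamma>) @ E # drop (Suc k) (B # \<Gamma>)) t D"
    using Lam.IH[OF t] Lam.prems(2) by simp
  then show ?case using C by (auto intro: typing.T_Lam)
next
  case (App t s)
  from App.prems(1) obtain B where "typing \<Gamma> (subst k (Con E) t) (Imp B C)"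
    "typing \<Gamma> (subst k (Con E) s) B" by (auto elim: typ_AppE)
  then show ?case using App.IH App.prems(2) by (meson typing.T_App)
next
  case (TLam t)
  from TLam.prems(1) obtain A where C: "C = All A" and
    t: "typing (map (fshift 0) \<Gamma>) (subst k (Con (fshift 0 E)) t) A"
    by (auto elim: typ_TLamE)
  have "typing (take k (map (fshift 0) \<Gamma>) @ fshift 0 E # drop k (map (fshift 0) \<Gamma>)) t A"
    using TLam.IH[OF t] TLam.prems(2) by simp
  then show ?case using C by (auto intro: typing.T_TLam simp: take_map drop_map)
next
  case (TApp t Y)
  then show ?case by (auto elim!: typ_TAppE intro: typing.T_TApp)
qed


inductive_cases betaE_Var: "beta (Var i) r"
inductive_cases betaE_Con: "beta (Con A) r"
inductive_cases betaE_Lam: "beta (Lam t) r"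
inductive_cases betaE_App: "beta (App t s) r"
inductive_cases betaE_TLam: "beta (TLam t) r"
inductive_cases betaE_TApp: "beta (TApp t Y) r"

lemma betaE_App': "beta (App t s) r \<Longrightarrow> (\<exists>t1. t = Lam t1 \<and> r = subst 0 s t1) \<or>
  (\<exists>t'. beta t t' \<and> r = App t' s) \<or> (\<exists>s'. beta s s' \<and> r = App t s')"
  by (auto elim: betaE_App)

lemma betaE_TApp': "beta (TApp t Y) r \<Longrightarrow> (\<exists>t1. t = TLam t1 \<and> r = asubst 0 Y t1) \<or>
  (\<exists>t'. beta t t' \<and> r = TApp t' Y)"
  by (auto elim: betaE_TApp)

lemma sg_ext_comm: "(\<lambda>a. sg 0 (f Y) (ext f a)) = (\<lambda>a. f (sg 0 Y a))"
  by (rule ext) (simp add: sg_def ext_def split: nat.split)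

lemma trn_asubst0: "asubst 0 (f n) (trn (ext f) t) = trn f (asubst 0 n t)"
  by (simp add: asubst_trn trn_comp comp_def sg_ext_comm)

lemma beta_trn_back: "beta (trn f b) r \<Longrightarrow> \<exists>b0. beta b b0 \<and> r = trn f b0"
proof (induction b arbitrary: f r)
  case (Var i) then show ?case by (auto elim: betaE_Var)
next
  case (Con A) then show ?case by (auto elim: betaE_Con)
next
  case (Lam t) then show ?case by (fastforce elim!: betaE_Lam intro: beta.intros)
next
  case (TLam t) then show ?case by (fastforce elim!: betaE_TLam intro: beta.intros)
next
  case (App t s)
  from betaE_App'[OF App.prems[simplified]] show ?case
  proof (elim disjE exE conjE)
    fix t1 assume a: "trn f t = Lam t1" "r = subst 0 (trn f s) t1"
    then obtain t0 where "t = Lam t0" "t1 = trn f t0" by (cases t) auto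
    then show ?thesis using a by (auto simp: trn_subst intro!: exI beta.intros)
  next
    fix t' assume "beta (trn f t) t'" "r = App t' (trn f s)"
    then show ?thesis using App.IH(1) by (fastforce intro: beta.intros)
  next
    fix s' assume "beta (trn f s) s'" "r = App (trn f t) s'"
    then show ?thesis using App.IH(2) by (fastforce intro: beta.intros)
  qed
next
  case (TApp t n)
  from betaE_TApp'[OF TApp.prems[simplified]] show ?case
  proof (elim disjE exE conjE)
    fix t1 assume a: "trn f t = TLam t1" "r = asubst 0 (f n) t1"
    then obtain t0 where "t = TLam t0" "t1 = trn (ext f) t0" by (cases t) auto
    then show ?thesis using a by (auto simp: trn_asubst0 intro!: exI beta.intros)
  next
    fix t' assume "beta (trn f t) t'" "r = TApp t' (f n)"
    then show ?thesis using TApp.IH by (fastforce intro: beta.intros)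
  qed
qed

lemma asubst0_con_shift: "asubst 0 n (subst k (Con (fshift 0 E)) t) = subst k (Con E) (asubst 0 n t)"
proof -
  have "asubst 0 n (subst k (Con (fshift 0 E)) t) = subst k (trn (sg 0 n) (Con (fshift 0 E))) (asubst 0 n t)"
    by (simp add: asubst_trn trn_subst del: trn.simps)
  also have "trn (sg 0 n) (Con (fshift 0 E)) = Con E"
    by (simp add: fshift_frn frn_comp comp_def sg0_sh0 frn_id)
  finally show ?thesis .
qed

lemma beta_subst_back: "beta (subst k (Con E) b) r \<Longrightarrow> \<exists>b0. beta b b0 \<and> r = subst k (Con E) b0"
proof (induction b arbitrary: k E r)
  case (Var i) then show ?case by (auto elim: betaE_Var betaE_Con split: if_splits)
next
  case (Con A) then show ?case by (auto elim: betaE_Con)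
next
  case (Lam t) then show ?case by (fastforce elim!: betaE_Lam intro: beta.intros)
next
  case (TLam t) then show ?case by (fastforce elim!: betaE_TLam intro: beta.intros)
next
  case (App t s)
  from betaE_App'[OF App.prems[simplified]] show ?case
  proof (elim disjE exE conjE)
    fix t1 assume a: "subst k (Con E) t = Lam t1" "r = subst 0 (subst k (Con E) s) t1"
    then obtain t0 where "t = Lam t0" "t1 = subst (Suc k) (Con E) t0" by (cases t) (auto split: if_splits)
    then show ?thesis using a by (auto simp: subst_subst_con intro!: exI beta.intros)
  next
    fix t' assume "beta (subst k (Con E) t) t'" "r = App t' (subst k (Con E) s)"
    then show ?thesis using App.IH(1) by (fastforce intro: beta.intros)
  next
    fix s' assume "beta (subst k (Con E) s) s'" "r = App (subst k (Con E) t) s'"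
    then show ?thesis using App.IH(2) by (fastforce intro: beta.intros)
  qed
next
  case (TApp t n)
  from betaE_TApp'[OF TApp.prems[simplified]] show ?case
  proof (elim disjE exE conjE)
    fix t1 assume a: "subst k (Con E) t = TLam t1" "r = asubst 0 n t1"
    then obtain t0 where "t = TLam t0" "t1 = subst k (Con (fshift 0 E)) t0" by (cases t) (auto split: if_splits)
    then show ?thesis using a by (auto simp: asubst0_con_shift intro!: exI beta.intros)
  next
    fix t' assume "beta (subst k (Con E) t) t'" "r = TApp t' n"
    then show ?thesis using TApp.IH by (fastforce intro: beta.intros)
  qed
qed

lemma star_trn_back: "beta_star (trn f b) m \<Longrightarrow> \<exists>b'. beta_star b b' \<and> m = trn f b'"
proof (induction rule: rtranclp_induct)
  case base then show ?case by blast
next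
  case (step y z)
  then obtain b' where "beta_star b b'" "y = trn f b'" by blast
  with step(2) obtain b0 where "beta b' b0" "z = trn f b0" using beta_trn_back by blast
  moreover have "beta_star b b0" using calculation(1) \<open>beta_star b b'\<close> by (meson rtranclp.rtrancl_into_rtrancl)
  ultimately show ?case by blast
qed

lemma star_subst_back: "beta_star (subst k (Con E) b) m \<Longrightarrow> \<exists>b'. beta_star b b' \<and> m = subst k (Con E) b'"
proof (induction rule: rtranclp_induct)
  case base then show ?case by blast
next
  case (step y z)
  then obtain b' where "beta_star b b'" "y = subst k (Con E) b'" by blast
  with step(2) obtain b0 where "beta b' b0" "z = subst k (Con E) b0" using beta_subst_back by blast
  moreover have "beta_star b b0" using calculation(1) \<open>beta_star b b'\<close> by (meson rtranclp.rtrancl_into_rtrancl)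
  ultimately show ?case by blast
qed

lemma normal_trn_back: "normal (trn f b) \<Longrightarrow> normal b"
proof (induction b arbitrary: f)
  case (App t s) then show ?case by (cases t) auto
next
  case (TApp t n) then show ?case by (cases t) auto
qed auto

lemma normal_subst_back: "normal (subst k (Con E) b) \<Longrightarrow> normal b"
proof (induction b arbitrary: k E)
  case (App t s) then show ?case by (cases t) auto
next
  case (TApp t n) then show ?case by (cases t) auto
qed auto

fun hd_con :: "tm \<Rightarrow> bool" where
  "hd_con (Con A) = True"
| "hd_con (App t s) = hd_con t"
| "hd_con (TApp t Y) = hd_con t"
| "hd_con _ = False"

lemma hd_con_beta: "beta t t' \<Longrightarrow> hd_con t \<Longrightarrow> hd_con t'"
  by (induction rule: beta.induct) auto

lemma hd_con_star: "beta_star t t' \<Longrightarrow> hd_con t \<Longrightarrow> hd_con t'"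
  by (induction rule: rtranclp_induct) (auto intro: hd_con_beta)

lemma hd_con_not: "hd_con t \<Longrightarrow> \<not> is_lam t \<and> \<not> is_tlam t"
  by (cases t) auto

lemma hd_con_apps: "hd_con t \<Longrightarrow> hd_con (apps t Ts)"
  by (induction t Ts rule: apps.induct) auto

lemma apps_snoc_l: "apps t (Ts @ [Inl s]) = App (apps t Ts) s"
  by (induction t Ts rule: apps.induct) auto

lemma apps_snoc_r: "apps t (Ts @ [Inr Y]) = TApp (apps t Ts) Y"
  by (induction t Ts rule: apps.induct) auto

lemma tba_lift: "tba N (lift k s) = tba N s"
  by (induction s arbitrary: k N) auto

lemma tba_subst: "tba N t \<Longrightarrow> tba N s \<Longrightarrow> tba N (subst k s t)"
proof (induction t arbitrary: k s N)
  case (Lam t)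
  have "tba N (lift 0 s)" using Lam.prems(2) by (simp add: tba_lift)
  then show ?case using Lam by simp
next
  case (TLam t)
  have "tba (Suc N) (ashift 0 s)" unfolding ashift_trn
    using TLam.prems(2) by (rule tba_trn) (simp add: sh_def)
  then show ?case using TLam by simp
qed auto

lemma tba_beta: "beta t t' \<Longrightarrow> tba N t \<Longrightarrow> tba N t'"
proof (induction arbitrary: N rule: beta.induct)
  case (B_beta t s) then show ?case by (simp add: tba_subst)
next
  case (B_tbeta t Y)
  then show ?case unfolding asubst_trn by (auto intro!: tba_trn simp: sg_def)
qed auto

lemma tba_star: "beta_star t t' \<Longrightarrow> tba N t \<Longrightarrow> tba N t'"
  by (induction rule: rtranclp_induct) (auto intro: tba_beta)

lemma star_Lam: "beta_star t t' \<Longrightarrow> beta_star (Lam t) (Lam t')"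
  by (induction rule: rtranclp_induct) (auto intro: beta.intros rtranclp.rtrancl_into_rtrancl)
lemma star_TLam: "beta_star t t' \<Longrightarrow> beta_star (TLam t) (TLam t')"
  by (induction rule: rtranclp_induct) (auto intro: beta.intros rtranclp.rtrancl_into_rtrancl)
lemma star_AppL: "beta_star t t' \<Longrightarrow> beta_star (App t s) (App t' s)"
  by (induction rule: rtranclp_induct) (auto intro: beta.intros rtranclp.rtrancl_into_rtrancl)
lemma star_AppR: "beta_star s s' \<Longrightarrow> beta_star (App t s) (App t s')"
  by (induction rule: rtranclp_induct) (auto intro: beta.intros rtranclp.rtrancl_into_rtrancl)
lemma star_TApp: "beta_star t t' \<Longrightarrow> beta_star (TApp t Y) (TApp t' Y)"
  by (induction rule: rtranclp_induct) (auto intro: beta.intros rtranclp.rtrancl_into_rtrancl)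

lemma decomp_App: "beta_star x m \<Longrightarrow> x = App u (Con B) \<Longrightarrow>
   (\<exists>u'. beta_star u u' \<and> m = App u' (Con B)) \<or> (\<exists>b. beta_star u (Lam b) \<and> beta_star (subst 0 (Con B) b) m)"
proof (induction arbitrary: u rule: rtranclp_induct)
  case base then show ?case by blast
next
  case (step y z)
  from step.IH[OF step.prems] show ?case
  proof
    assume "\<exists>u'. beta_star u u' \<and> y = App u' (Con B)"
    then obtain u' where u': "beta_star u u'" "y = App u' (Con B)" by blast
    from betaE_App'[OF step(2)[unfolded u'(2)]] show ?thesis
    proof (elim disjE exE conjE)
      fix t1 assume "u' = Lam t1" "z = subst 0 (Con B) t1"
      then show ?thesis using u' by auto
    next
      fix t' assume a: "beta u' t'" "z = App t' (Con B)"
      then have "beta_star u t'" using u' by (meson rtranclp.rtrancl_into_rtrancl)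
      then show ?thesis using a by blast
    next
      fix s' assume "beta (Con B) s'" then show ?thesis by (auto elim: betaE_Con)
    qed
  next
    assume "\<exists>b. beta_star u (Lam b) \<and> beta_star (subst 0 (Con B) b) y"
    then show ?thesis using step(2) by (meson rtranclp.rtrancl_into_rtrancl)
  qed
qed

lemma decomp_TApp: "beta_star x m \<Longrightarrow> x = TApp u Y \<Longrightarrow>
   (\<exists>u'. beta_star u u' \<and> m = TApp u' Y) \<or> (\<exists>b. beta_star u (TLam b) \<and> beta_star (asubst 0 Y b) m)"
proof (induction arbitrary: u rule: rtranclp_induct)
  case base then show ?case by blast
next
  case (step y z)
  from step.IH[OF step.prems] show ?case
  proof
    assume "\<exists>u'. beta_star u u' \<and> y = TApp u' Y"
    then obtain u' where u': "beta_star u u'" "y = TApp u' Y" by blast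
    from betaE_TApp'[OF step(2)[unfolded u'(2)]] show ?thesis
    proof (elim disjE exE conjE)
      fix t1 assume "u' = TLam t1" "z = asubst 0 Y t1"
      then show ?thesis using u' by auto
    next
      fix t' assume a: "beta u' t'" "z = TApp t' Y"
      then have "beta_star u t'" using u' by (meson rtranclp.rtrancl_into_rtrancl)
      then show ?thesis using a by blast
    qed
  next
    assume "\<exists>b. beta_star u (TLam b) \<and> beta_star (asubst 0 Y b) y"
    then show ?thesis using step(2) by (meson rtranclp.rtrancl_into_rtrancl)
  qed
qed


lemma dag_closed: "t \<in> dag A \<Longrightarrow> closed t"
  by (cases A) (auto simp: den_def)

lemma asubst_ashift0: "asubst 0 Y (ashift 0 u) = u"
  by (simp add: asubst_trn ashift_trn trn_comp comp_def sg0_sh0 trn_id)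

lemma dag_Imp': "dag (Imp B C) = {t. closed t \<and> (\<exists>u. beta_star t u \<and> (\<forall>s \<in> dag B. App u s \<in> dag C))}"
  by (simp add: subst_lift)

lemma dag_All': "dag (All A) = {t. closed t \<and> (\<exists>u. beta_star t u \<and> (\<forall>Y. TApp u Y \<in> dag (fsubst 0 Y A)))}"
  by (simp add: asubst_ashift0)

lemma neutral: "typing \<Gamma> t T \<Longrightarrow> \<Gamma> = [] \<Longrightarrow> normal t \<Longrightarrow> hd_con t \<or> is_lam t \<or> is_tlam t"
proof (induction rule: typing.induct)
  case (T_App \<Gamma> t B C s)
  then have "hd_con t \<or> is_tlam t" by auto
  moreover have "\<not> is_tlam t" using T_App.hyps(1) by (cases t) (auto elim: typ_TLamE)
  ultimately show ?case by simp
next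
  case (T_TApp \<Gamma> t A Y)
  then have "hd_con t \<or> is_lam t" by auto
  moreover have "\<not> is_lam t" using T_TApp.hyps(1) by (cases t) (auto elim: typ_LamE)
  ultimately show ?case by simp
qed auto

lemma hd_con_fba: "hd_con t \<Longrightarrow> typing \<Gamma> t T \<Longrightarrow> tba N t \<Longrightarrow> fba N T"
proof (induction t arbitrary: T)
  case (App t s)
  then obtain B where "typing \<Gamma> t (Imp B T)" by (auto elim: typ_AppE)
  then show ?case using App by fastforce
next
  case (TApp t Y)
  then obtain A where A: "typing \<Gamma> t (All A)" "T = fsubst 0 Y A" by (auto elim: typ_TAppE)
  then have "fba (Suc N) A" using TApp by fastforce
  then show ?case unfolding A(2) fsubst_frn using TApp.prems(3)
    by (auto intro!: fba_frn simp: sg_def)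
qed (auto elim: typ_ConE)

definition rho :: "nat \<Rightarrow> nat \<Rightarrow> nat" where
  "rho Y n = (if n = Y then 0 else Suc n)"

lemma rho_sg: "\<forall>n<Suc Y. (rho Y \<circ> sg 0 Y) n = n"
  by (auto simp: rho_def sg_def)

lemma frn_rho: "fba (Suc Y) A \<Longrightarrow> frn (rho Y) (fsubst 0 Y A) = A"
  unfolding fsubst_frn frn_comp
  using frn_agree[of "Suc Y" A "rho Y \<circ> sg 0 Y" "\<lambda>n. n"] rho_sg by (simp add: frn_id)

lemma trn_rho: "tba (Suc Y) b \<Longrightarrow> trn (rho Y) (asubst 0 Y b) = b"
  unfolding asubst_trn trn_comp
  using trn_agree[of "Suc Y" b "rho Y \<circ> sg 0 Y" "\<lambda>n. n"] rho_sg by (simp add: trn_id)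

lemma main:
  "(\<forall>D Ts. (\<forall>T \<in> set Ts. arg_ok T) \<longrightarrow>
            apps (Con D) Ts \<in> den A \<longrightarrow> apps (Con D) Ts \<in> dag A)
         \<and> dag A \<subseteq> den A"
proof (induction "fsize A" arbitrary: A rule: less_induct)
  case less
  show ?case
  proof (cases A)
    case (Atom X)
    then show ?thesis by simp
  next
    case (Imp B C)
    have IHB: "\<forall>D Ts. (\<forall>T \<in> set Ts. arg_ok T) \<longrightarrow> apps (Con D) Ts \<in> den B \<longrightarrow> apps (Con D) Ts \<in> dag B"
      "dag B \<subseteq> den B" using less[of B] Imp by auto
    have IHC: "\<forall>D Ts. (\<forall>T \<in> set Ts. arg_ok T) \<longrightarrow> apps (Con D) Ts \<in> den C \<longrightarrow> apps (Con D) Ts \<in> dag C"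
      "dag C \<subseteq> den C" using less[of C] Imp by auto
    have P1: "apps (Con D) Ts \<in> dag (Imp B C)"
      if ok: "\<forall>T \<in> set Ts. arg_ok T" and mem: "apps (Con D) Ts \<in> den (Imp B C)" for D Ts
    proof -
      let ?t = "apps (Con D) Ts"
      from mem obtain n where t: "closed ?t" "beta_star ?t n" "normal n" "typing [] n (Imp B C)"
        by (auto simp: den_def)
      have hn: "hd_con n" using hd_con_star[OF t(2)] hd_con_apps by simp
      have "App ?t s \<in> dag C" if s: "s \<in> dag B" for s
      proof -
        have cs: "closed s" using s dag_closed by blast
        from s IHB(2) obtain m where m: "beta_star s m" "normal m" "typing [] m B"
          by (auto simp: den_def)
        have "beta_star (App ?t s) (App n m)"
          using star_AppL[OF t(2)] star_AppR[OF m(1)] by (meson rtranclp_trans)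
        moreover have "normal (App n m)" using hn hd_con_not t(3) m(2) by simp
        moreover have "typing [] (App n m) C" using t(4) m(3) by (rule T_App)
        ultimately have "App ?t s \<in> den C" using t(1) cs by (auto simp: den_def closed_def)
        then have "apps (Con D) (Ts @ [Inl s]) \<in> den C" by (simp add: apps_snoc_l)
        moreover have "\<forall>T \<in> set (Ts @ [Inl s]). arg_ok T" using ok cs by auto
        ultimately have "apps (Con D) (Ts @ [Inl s]) \<in> dag C" using IHC(1) by blast
        then show ?thesis by (simp add: apps_snoc_l)
      qed
      then show ?thesis using t(1) unfolding dag_Imp' by blast
    qed
    have P2: "t \<in> den (Imp B C)" if tm: "t \<in> dag (Imp B C)" for t
    proof -
      from tm obtain u where u: "closed t" "beta_star t u" "\<forall>s \<in> dag B. App u s \<in> dag C"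
        unfolding dag_Imp' by blast
      have "Con B \<in> den B" by (auto simp: den_def closed_def intro: T_Con)
      then have "Con B \<in> dag B" using IHB(1)[rule_format, of "[]" B] by simp
      then have "App u (Con B) \<in> den C" using u(3) IHC(2) by blast
      then obtain m where m: "beta_star (App u (Con B)) m" "normal m" "typing [] m C"
        by (auto simp: den_def)
      from decomp_App[OF m(1) refl] show ?thesis
      proof (elim disjE exE conjE)
        fix u' assume a: "beta_star u u'" "m = App u' (Con B)"
        then obtain B' where "typing [] u' (Imp B' C)" "typing [] (Con B) B'"
          using m(3) by (auto elim: typ_AppE)
        then have "typing [] u' (Imp B C)" by (auto elim: typ_ConE)
        moreover have "normal u'" using m(2) a(2) by simp
        moreover have "beta_star t u'" using u(2) a(1) by (meson rtranclp_trans)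
        ultimately show ?thesis using u(1) by (auto simp: den_def)
      next
        fix b assume a: "beta_star u (Lam b)" "beta_star (subst 0 (Con B) b) m"
        from star_subst_back[OF a(2)] obtain b' where b': "beta_star b b'" "m = subst 0 (Con B) b'"
          by blast
        have "normal b'" using normal_subst_back m(2) b'(2) by blast
        moreover have "typing [B] b' C" using typ_subst_con[of "[]" 0 B b' C] m(3) b'(2) by simp
        moreover have "beta_star t (Lam b')"
          using u(2) a(1) star_Lam[OF b'(1)] by (meson rtranclp_trans)
        ultimately show ?thesis using u(1) by (auto simp: den_def intro: T_Lam)
      qed
    qed
    show ?thesis using P1 P2 Imp by blast
  next
    case (All A0)
    have IH: "\<forall>D Ts. (\<forall>T \<in> set Ts. arg_ok T) \<longrightarrow> apps (Con D) Ts \<in> den (fsubst 0 Y A0) \<longrightarrow> apps (Con D) Ts \<in> dag (fsubst 0 Y A0)"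
      "dag (fsubst 0 Y A0) \<subseteq> den (fsubst 0 Y A0)" for Y
      using less[of "fsubst 0 Y A0"] All by auto
    have P1: "apps (Con D) Ts \<in> dag (All A0)"
      if ok: "\<forall>T \<in> set Ts. arg_ok T" and mem: "apps (Con D) Ts \<in> den (All A0)" for D Ts
    proof -
      let ?t = "apps (Con D) Ts"
      from mem obtain n where t: "closed ?t" "beta_star ?t n" "normal n" "typing [] n (All A0)"
        by (auto simp: den_def)
      have hn: "hd_con n" using hd_con_star[OF t(2)] hd_con_apps by simp
      have "TApp ?t Y \<in> dag (fsubst 0 Y A0)" for Y
      proof -
        have "beta_star (TApp ?t Y) (TApp n Y)" using star_TApp[OF t(2)] .
        moreover have "normal (TApp n Y)" using hn hd_con_not t(3) by simp
        moreover have "typing [] (TApp n Y) (fsubst 0 Y A0)" using t(4) by (rule T_TApp)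
        ultimately have "TApp ?t Y \<in> den (fsubst 0 Y A0)" using t(1) by (auto simp: den_def closed_def)
        then have "apps (Con D) (Ts @ [Inr Y]) \<in> den (fsubst 0 Y A0)" by (simp add: apps_snoc_r)
        moreover have "\<forall>T \<in> set (Ts @ [Inr Y]). arg_ok T" using ok by auto
        ultimately have "apps (Con D) (Ts @ [Inr Y]) \<in> dag (fsubst 0 Y A0)" using IH(1) by blast
        then show ?thesis by (simp add: apps_snoc_r)
      qed
      then show ?thesis using t(1) unfolding dag_All' by blast
    qed
    have P2: "t \<in> den (All A0)" if tm: "t \<in> dag (All A0)" for t
    proof -
      from tm obtain u where u: "closed t" "beta_star t u" "\<forall>Y. TApp u Y \<in> dag (fsubst 0 Y A0)"
        unfolding dag_All' by blast
      obtain N1 where N1: "tba N1 u" using tba_ex by blast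
      obtain N2 where N2: "fba N2 A0" using fba_ex by blast
      define Y where "Y = max N1 N2"
      have tbY: "tba Y u" using N1 tba_mono Y_def by auto
      have fbY: "fba (Suc Y) A0" using N2 fba_mono Y_def by auto
      have "TApp u Y \<in> den (fsubst 0 Y A0)" using u(3) IH(2) by blast
      then obtain m where m: "beta_star (TApp u Y) m" "normal m" "typing [] m (fsubst 0 Y A0)"
        by (auto simp: den_def)
      from decomp_TApp[OF m(1) refl] show ?thesis
      proof (elim disjE exE conjE)
        fix u' assume a: "beta_star u u'" "m = TApp u' Y"
        then obtain A' where A': "typing [] u' (All A')" "fsubst 0 Y A' = fsubst 0 Y A0"
          using m(3) by (auto elim: typ_TAppE)
        have nu: "normal u'" "\<not> is_tlam u'" using m(2) a(2) by auto
        have "\<not> is_lam u'" using A'(1) by (cases u') (auto elim: typ_LamE)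
        then have "hd_con u'" using neutral[OF A'(1) refl nu(1)] nu(2) by auto
        moreover have "tba Y u'" using tba_star[OF a(1) tbY] .
        ultimately have "fba Y (All A')" using hd_con_fba A'(1) by blast
        then have fA: "fba (Suc Y) A'" by simp
        have "A' = A0" using frn_rho[OF fA] frn_rho[OF fbY] A'(2) by metis
        then have "typing [] u' (All A0)" using A'(1) by simp
        moreover have "beta_star t u'" using u(2) a(1) by (meson rtranclp_trans)
        ultimately show ?thesis using u(1) nu(1) by (auto simp: den_def)
      next
        fix b assume a: "beta_star u (TLam b)" "beta_star (asubst 0 Y b) m"
        from star_trn_back[OF a(2)[unfolded asubst_trn]] obtain b' where
          b': "beta_star b b'" "m = trn (sg 0 Y) b'" by blast
        have "normal b'" using normal_trn_back m(2) b'(2) by blast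
        have "tba Y (TLam b)" using tba_star[OF a(1) tbY] .
        then have "tba (Suc Y) b" by simp
        then have tb': "tba (Suc Y) b'" using tba_star[OF b'(1)] by blast
        have "typing (map (frn (rho Y)) []) (trn (rho Y) m) (frn (rho Y) (fsubst 0 Y A0))"
          using typ_trn[OF m(3)] .
        then have "typing [] b' A0"
          using trn_rho[OF tb'] frn_rho[OF fbY] b'(2) by (simp add: asubst_trn)
        then have "typing [] (TLam b') (All A0)" using typ_TLam'[of "[]" b' A0] by simp
        moreover have "beta_star t (TLam b')"
          using u(2) a(1) star_TLam[OF b'(1)] by (meson rtranclp_trans)
        ultimately show ?thesis using u(1) \<open>normal b'\<close> by (auto simp: den_def)
      qed
    qed
    show ?thesis using P1 P2 All by blast
  qed
qed

theorem mainTheorem9: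
  fixes A :: fm
  shows "(\<forall>D Ts. (\<forall>T \<in> set Ts. arg_ok T) \<longrightarrow>
            apps (Con D) Ts \<in> den A \<longrightarrow> apps (Con D) Ts \<in> dag A)
         \<and> dag A \<subseteq> den A"
  by (rule main)

end
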